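(* Let $n \ge 2$, let $\lambda = a_1\omega_1 + a_2\omega_2 + a_3\omega_3$ with $a_1,a_2,a_3 \in \mathbb{Z}_{\ge 0}$, and let $\nu, \eta$ be dominant integral weights of $\mathfrak{sl}(2n,\mathbb{C})$ such that the shapes of $\nu$ and $\eta$ are both contained in the shape of $\lambda$ and the shape of $\eta$ is even. Then $$|\operatorname{LRS}(\lambda/\nu, \eta)| = c^{\lambda}_{\nu,\eta}.$$
   Context: $\omega_1,\dots,\omega_{2n-1}$ are the fundamental weights of $\mathfrak{sl}(2n,\mathbb{C})$. To a dominant weight $\mu = \sum b_i\omega_i$ associate its shape: the Young diagram (left- and top-justified boxes) with $b_i$ columns of length $i$, longer columns to the left. Shape containment means containment of diagrams aligned at their top-left corners. A shape is even if all its columns have even length. $l(\eta)$ denotes the length of the longest column of the shape of $\eta$. For $\nu \subseteq \lambda$, a tableau of skew shape $\lambda/\nu$ is a filling of the boxes of the shape of $\lambda$ not in the shape of $\nu$ with letters from $\{1,\dots,2n\}$; it is semi-standard if rows weakly increase left to right and columns strictly increase downward. Its word is obtained by reading rows from right to left, top row first, ignoring empty boxes. A word $w_1\cdots w_k$ is dominant if for every prefix and every $i$, the number of letters $i$ in the prefix is at least the number of letters $i+1$. $\operatorname{LR}(\lambda/\nu,\eta)$ (Littlewood–Richardson tableaux) is the set of semi-standard tableaux of skew shape $\lambda/\nu$ whose word is dominant and has weight $\eta$ (i.e. for each $i$, the number of entries equal to $i$ is the number of boxes in row $i$ of the shape of $\eta$). $\operatorname{LRS}(\lambda/\nu,\eta)$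 ($n$-symplectic Sundaram tableaux) is the subset of those in which, for each $i \in \{0,1,\dots,\tfrac12 l(\eta)\}$, the letter $2i+1$ does not appear in any row strictly below row $n+i$. The Littlewood–Richardson coefficient $c^\lambda_{\nu,\eta}$ is the multiplicity of the simple module ${\rm L}(\lambda)$ in ${\rm L}(\nu)\otimes{\rm L}(\eta)$ for $\mathfrak{sl}(2n,\mathbb{C})$ (equivalently $|\operatorname{LR}(\lambda/\nu,\eta)|$). *)

theory Defs
  imports Main
begin

text \<open>A dominant integral weight of sl(2n) is encoded by its coefficient function
  b, where mu = sum of b i * omega_i for i in {1..2n-1}; b vanishes elsewhere.\<close>

definition dom_weight :: "nat \<Rightarrow> (nat \<Rightarrow> nat) \<Rightarrow> bool" where
  "dom_weight n b \<longleftrightarrow> (\<forall>i. b i \<noteq> 0 \<longrightarrow> 1 \<le> i \<and> i \<le> 2*n - 1)"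

text \<open>Length of row j (j >= 1) of the shape: number of columns of length >= j.\<close>
definition shape_row :: "nat \<Rightarrow> (nat \<Rightarrow> nat) \<Rightarrow> nat \<Rightarrow> nat" where
  "shape_row n b j = (\<Sum>i\<in>{j..2*n-1}. b i)"

definition boxes :: "nat \<Rightarrow> (nat \<Rightarrow> nat) \<Rightarrow> (nat \<times> nat) set" where
  "boxes n b = {(r, c). 1 \<le> r \<and> 1 \<le> c \<and> c \<le> shape_row n b r}"

definition shape_contained :: "nat \<Rightarrow> (nat \<Rightarrow> nat) \<Rightarrow> (nat \<Rightarrow> nat) \<Rightarrow> bool" where
  "shape_contained n \<nu> lam \<longleftrightarrow> boxes n \<nu> \<subseteq> boxes n lam"

definition even_shape :: "(nat \<Rightarrow> nat) \<Rightarrow> bool" where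
  "even_shape b \<longleftrightarrow> (\<forall>i. odd i \<longrightarrow> b i = 0)"

definition longest_col :: "nat \<Rightarrow> (nat \<Rightarrow> nat) \<Rightarrow> nat" where
  "longest_col n b = Max (insert 0 {i \<in> {1..2*n-1}. b i \<noteq> 0})"

definition skew :: "nat \<Rightarrow> (nat \<Rightarrow> nat) \<Rightarrow> (nat \<Rightarrow> nat) \<Rightarrow> (nat \<times> nat) set" where
  "skew n lam \<nu> = boxes n lam - boxes n \<nu>"

text \<open>A tableau is a function T r c giving the letter in box (r,c); it is 0 outside the
  skew shape so that each tableau has a unique representation.\<close>
definition semistandard ::
  "nat \<Rightarrow> (nat \<Rightarrow> nat) \<Rightarrow> (nat \<Rightarrow> nat) \<Rightarrow> (nat \<Rightarrow> nat \<Rightarrow> nat) \<Rightarrow> bool" where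
  "semistandard n lam \<nu> T \<longleftrightarrow>
     (\<forall>r c. (r, c) \<in> skew n lam \<nu> \<longrightarrow> 1 \<le> T r c \<and> T r c \<le> 2*n) \<and>
     (\<forall>r c. (r, c) \<notin> skew n lam \<nu> \<longrightarrow> T r c = 0) \<and>
     (\<forall>r c c'. (r, c) \<in> skew n lam \<nu> \<and> (r, c') \<in> skew n lam \<nu> \<and> c < c' \<longrightarrow> T r c \<le> T r c') \<and>
     (\<forall>r r' c. (r, c) \<in> skew n lam \<nu> \<and> (r', c) \<in> skew n lam \<nu> \<and> r < r' \<longrightarrow> T r c < T r' c)"

definition tab_word ::
  "nat \<Rightarrow> (nat \<Rightarrow> nat) \<Rightarrow> (nat \<Rightarrow> nat) \<Rightarrow> (nat \<Rightarrow> nat \<Rightarrow> nat) \<Rightarrow> nat list" where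
  "tab_word n lam \<nu> T =
     concat (map (\<lambda>r. map (\<lambda>c. T r c)
                   (rev (filter (\<lambda>c. (r, c) \<in> skew n lam \<nu>) [1..<shape_row n lam r + 1])))
             [1..<2*n])"

definition dominant_word :: "nat list \<Rightarrow> bool" where
  "dominant_word w \<longleftrightarrow>
     (\<forall>k i. 1 \<le> i \<longrightarrow> count_list (take k w) (i + 1) \<le> count_list (take k w) i)"

definition has_weight :: "nat \<Rightarrow> nat list \<Rightarrow> (nat \<Rightarrow> nat) \<Rightarrow> bool" where
  "has_weight n w \<eta> \<longleftrightarrow> (\<forall>i. 1 \<le> i \<longrightarrow> count_list w i = shape_row n \<eta> i)"

definition LR :: "nat \<Rightarrow> (nat \<Rightarrow> nat) \<Rightarrow> (nat \<Rightarrow> nat) \<Rightarrow> (nat \<Rightarrow> nat) \<Rightarrow> (nat \<Rightarrow> nat \<Rightarrow> nat) set" where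
  "LR n lam \<nu> \<eta> = {T. semistandard n lam \<nu> T \<and> dominant_word (tab_word n lam \<nu> T)
                      \<and> has_weight n (tab_word n lam \<nu> T) \<eta>}"

definition LRS :: "nat \<Rightarrow> (nat \<Rightarrow> nat) \<Rightarrow> (nat \<Rightarrow> nat) \<Rightarrow> (nat \<Rightarrow> nat) \<Rightarrow> (nat \<Rightarrow> nat \<Rightarrow> nat) set" where
  "LRS n lam \<nu> \<eta> = {T \<in> LR n lam \<nu> \<eta>.
      \<forall>i \<le> longest_col n \<eta> div 2. \<forall>r c. (r, c) \<in> skew n lam \<nu> \<and> T r c = 2*i + 1 \<longrightarrow> r \<le> n + i}"

definition lr_coeff :: "nat \<Rightarrow> (nat \<Rightarrow> nat) \<Rightarrow> (nat \<Rightarrow> nat) \<Rightarrow> (nat \<Rightarrow> nat) \<Rightarrow> nat" where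
  "lr_coeff n lam \<nu> \<eta> = card (LR n lam \<nu> \<eta>)"

end

theory Submission
  imports Defs
begin

lemma shape_row_zero:
  assumes "\<forall>i\<ge>4. lam i = 0" "r \<ge> 4"
  shows "shape_row n lam r = 0"
  unfolding shape_row_def using assms by (intro sum.neutral) auto

lemma skew_row_le3:
  assumes "\<forall>i\<ge>4. lam i = 0" "(r, c) \<in> skew n lam \<nu>"
  shows "r \<le> 3"
proof (rule ccontr)
  assume "\<not> r \<le> 3"
  then have "shape_row n lam r = 0" using shape_row_zero assms(1) by simp
  then show False using assms(2) by (auto simp: skew_def boxes_def)
qed

lemma no_one_row3:
  assumes lam4: "\<forall>i\<ge>4. lam i = 0" and n2: "2 \<le> n"
    and ev: "even_shape \<eta>"
    and T: "T \<in> LR n lam \<nu> \<eta>"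
    and c: "(3, c) \<in> skew n lam \<nu>" and T1: "T 3 c = 1"
  shows False
proof -
  define R where "R r = map (T r) (rev (filter (\<lambda>c. (r,c) \<in> skew n lam \<nu>) [1..<shape_row n lam r + 1]))" for r
  define w where "w = tab_word n lam \<nu> T"
  have w: "w = concat (map R [1..<2*n])" unfolding w_def tab_word_def R_def by (rule refl)
  have split: "[1..<2*n] = [1..<3] @ 3 # [4..<2*n]"
  proof -
    have "[1..<2*n] = [1..<3] @ [3..<2*n]" using n2 upt_add_eq_append[of 1 3 "2*n-3"] by simp
    moreover have "[3..<2*n] = 3 # [4..<2*n]" using n2 upt_conv_Cons[of 3 "2*n"] by simp
    ultimately show ?thesis by simp
  qed
  have "\<forall>r\<in>set [4..<2*n]. R r = []"
    using shape_row_zero[OF lam4] by (auto simp: R_def)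
  then have "concat (map R [4..<2*n]) = []" by (simp add: concat_eq_Nil_conv)
  define A where "A = concat (map R [1..<3])"
  have wA: "w = A @ R 3" using w split \<open>concat (map R [4..<2*n]) = []\<close> by (simp add: A_def)
  have ss: "semistandard n lam \<nu> T" and dom: "dominant_word w" and hw: "has_weight n w \<eta>"
    using T by (auto simp: LR_def w_def)
  have sorted: "sorted_wrt (\<ge>) (R 3)"
  proof -
    let ?L = "filter (\<lambda>c. (3,c) \<in> skew n lam \<nu>) [1..<shape_row n lam 3 + 1]"
    have "sorted_wrt (<) ?L" by (rule sorted_wrt_filter) (rule sorted_wrt_upt)
    moreover have "\<forall>x\<in>set ?L. (3,x) \<in> skew n lam \<nu>" by auto
    ultimately have "sorted_wrt (\<lambda>x y. T 3 x \<le> T 3 y) ?L"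
      using ss unfolding semistandard_def
      by (smt (verit, best) sorted_wrt_mono_rel)
    then show ?thesis by (simp add: R_def sorted_wrt_map sorted_wrt_rev)
  qed
  have "1 \<in> set (R 3)"
  proof -
    have "c \<in> set (filter (\<lambda>c. (3,c) \<in> skew n lam \<nu>) [1..<shape_row n lam 3 + 1])"
      using c by (auto simp: skew_def boxes_def)
    then show ?thesis using T1 unfolding R_def set_map set_rev by (intro rev_image_eqI[of c]) (simp_all del: upt_Suc)
  qed
  define v1 where "v1 = takeWhile (\<lambda>x. x \<noteq> 1) (R 3)"
  define v2 where "v2 = dropWhile (\<lambda>x. x \<noteq> 1) (R 3)"
  have R3: "R 3 = v1 @ v2" by (simp add: v1_def v2_def)
  obtain rest where v2: "v2 = 1 # rest"
  proof -
    have ne: "v2 \<noteq> []" using \<open>1 \<in> set (R 3)\<close> unfolding v2_def dropWhile_eq_Nil_conv by blast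
    then have "hd v2 = 1" unfolding v2_def using hd_dropWhile by blast
    with ne show ?thesis using that by (cases v2) auto
  qed
  have "\<forall>y\<in>set rest. y \<le> 1"
    using sorted R3 v2 by (simp add: sorted_wrt_append)
  then have c2: "count_list v2 2 = 0" using v2 by (auto simp: count_list_0_iff)
  have c1: "count_list v2 1 \<ge> 1" using v2 by simp
  have eq: "count_list w 1 = count_list w 2"
  proof -
    have "count_list w 1 = shape_row n \<eta> 1" "count_list w 2 = shape_row n \<eta> 2"
      using hw by (auto simp: has_weight_def)
    moreover have "\<eta> 1 = 0" using ev by (simp add: even_shape_def)
    moreover have "shape_row n \<eta> 1 = \<eta> 1 + shape_row n \<eta> 2"
    proof -
      have "{1..2*n-1} = insert 1 {2..2*n-1}" using n2 by auto
      then show ?thesis unfolding shape_row_def by simp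
    qed
    ultimately show ?thesis by simp
  qed
  have tk: "take (length (A @ v1)) w = A @ v1" using wA R3 by simp
  have "count_list (take (length (A @ v1)) w) (1+1) \<le> count_list (take (length (A @ v1)) w) 1"
    using dom unfolding dominant_word_def by blast
  then have "count_list (A @ v1) 2 \<le> count_list (A @ v1) 1" unfolding tk by (simp add: numeral_2_eq_2)
  moreover have "count_list w 2 = count_list (A @ v1) 2 + count_list v2 2"
    "count_list w 1 = count_list (A @ v1) 1 + count_list v2 1"
    using wA R3 by simp_all
  ultimately show False using c1 c2 eq by linarith
qed

theorem lemma6p4:
  fixes n a1 a2 a3 :: nat and \<nu> \<eta> :: "nat \<Rightarrow> nat"
  defines "lam \<equiv> (\<lambda>i::nat. if i = 1 then a1 else if i = 2 then a2 else if i = 3 then a3 else 0)"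
  assumes "2 \<le> n"
    and "dom_weight n \<nu>" and "dom_weight n \<eta>"
    and "shape_contained n \<nu> lam" and "shape_contained n \<eta> lam"
    and "even_shape \<eta>"
  shows "card (LRS n lam \<nu> \<eta>) = lr_coeff n lam \<nu> \<eta>"
proof -
  have lam4: "\<forall>i\<ge>4. lam i = 0" by (simp add: lam_def)
  have "LRS n lam \<nu> \<eta> = LR n lam \<nu> \<eta>"
  proof -
    have "\<forall>i \<le> longest_col n \<eta> div 2. \<forall>r c. (r, c) \<in> skew n lam \<nu> \<and> T r c = 2*i + 1 \<longrightarrow> r \<le> n + i"
      if T: "T \<in> LR n lam \<nu> \<eta>" for T
    proof (intro allI impI)
      fix i r c assume h: "(r, c) \<in> skew n lam \<nu> \<and> T r c = 2*i + 1"
      have r3: "r \<le> 3" using skew_row_le3[OF lam4] h by blast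
      show "r \<le> n + i"
      proof (cases "r = 3 \<and> i = 0")
        case True
        then show ?thesis using no_one_row3[OF lam4 assms(2) assms(7) T] h by auto
      next
        case False
        then show ?thesis using r3 assms(2) by auto
      qed
    qed
    then show ?thesis unfolding LRS_def by auto
  qed
  then show ?thesis by (simp add: lr_coeff_def)
qed

end
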